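(* Let $1\le r\le s\le t$ and let $u=ABCd$, $v=A'B'C'd'$ be vertices of $E3C(r,s,t)$ with $A\ne A'$, $B\ne B'$, $C\ne C'$ and $d\ne d'$. Then there exist $2r+2$ pairwise internally disjoint $u$–$v$ paths in $E3C(r,s,t)$, each of length at most $r+s+t+6$.
   Context: The exchanged 3-ary $n$-cube $E3C(r,s,t)$ ($r,s,t\ge1$, $n=r+s+t+1$): vertices are strings written $x=ABCd$ with $A\in\{0,1,2\}^r$, $B\in\{0,1,2\}^s$, $C\in\{0,1,2\}^t$, $d\in\{0,1,2\}$. Two distinct vertices $x=ABCd$, $y=A'B'C'd'$ are adjacent iff one of: (E0) $A=A',B=B',C=C'$ and $d\ne d'$; (E1) $d=d'=0$, $A=A'$, $B=B'$ and $C,C'$ differ in exactly one position; (E2) $d=d'=1$, $A=A'$, $C=C'$ and $B,B'$ differ in exactly one position; (E3) $d=d'=2$, $B=B'$, $C=C'$ and $A,A'$ differ in exactly one position. Paths are internally disjoint if they share no vertices other than their endpoints; length = number of edges. *)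

theory Defs
  imports Main
begin

type_synonym e3vert = "nat list \<times> nat list \<times> nat list \<times> nat"

definition tstr :: "nat \<Rightarrow> nat list \<Rightarrow> bool" where
  "tstr n X \<longleftrightarrow> length X = n \<and> (\<forall>x\<in>set X. x < 3)"

definition e3c_verts :: "nat \<Rightarrow> nat \<Rightarrow> nat \<Rightarrow> e3vert set" where
  "e3c_verts r s t = {(A,B,C,d). tstr r A \<and> tstr s B \<and> tstr t C \<and> d < 3}"

definition differ_one :: "nat list \<Rightarrow> nat list \<Rightarrow> bool" where
  "differ_one X Y \<longleftrightarrow> length X = length Y \<and> card {i. i < length X \<and> X ! i \<noteq> Y ! i} = 1"

definition e3c_adj :: "nat \<Rightarrow> nat \<Rightarrow> nat \<Rightarrow> e3vert \<Rightarrow> e3vert \<Rightarrow> bool" where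
  "e3c_adj r s t x y \<longleftrightarrow> x \<in> e3c_verts r s t \<and> y \<in> e3c_verts r s t \<and> x \<noteq> y \<and>
     (case x of (A,B,C,d) \<Rightarrow> case y of (A',B',C',d') \<Rightarrow>
        (A = A' \<and> B = B' \<and> C = C' \<and> d \<noteq> d')
      \<or> (d = 0 \<and> d' = 0 \<and> A = A' \<and> B = B' \<and> differ_one C C')
      \<or> (d = 1 \<and> d' = 1 \<and> A = A' \<and> C = C' \<and> differ_one B B')
      \<or> (d = 2 \<and> d' = 2 \<and> B = B' \<and> C = C' \<and> differ_one A A'))"

definition e3c_path :: "nat \<Rightarrow> nat \<Rightarrow> nat \<Rightarrow> e3vert \<Rightarrow> e3vert \<Rightarrow> e3vert list \<Rightarrow> bool" where
  "e3c_path r s t u v p \<longleftrightarrow> p \<noteq> [] \<and> hd p = u \<and> last p = v \<and> distinct p \<and>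
     set p \<subseteq> e3c_verts r s t \<and> (\<forall>i. Suc i < length p \<longrightarrow> e3c_adj r s t (p ! i) (p ! Suc i))"

definition path_len :: "'a list \<Rightarrow> nat" where
  "path_len p = length p - 1"

end

theory Submission
  imports Defs
begin


lemma differ_one_Cons_same: "differ_one (a#V) (a#V') \<longleftrightarrow> differ_one V V'"
proof -
  have "{i. i < length (a#V) \<and> (a#V)!i \<noteq> (a#V')!i} = Suc ` {i. i < length V \<and> V!i \<noteq> V'!i}"
  proof (rule set_eqI)
    fix i show "i \<in> {i. i < length (a#V) \<and> (a#V)!i \<noteq> (a#V')!i} \<longleftrightarrow> i \<in> Suc ` {i. i < length V \<and> V!i \<noteq> V'!i}"
      by (cases i) auto
  qed
  then show ?thesis unfolding differ_one_def by (simp add: card_image)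
qed

lemma differ_one_upd: "k < length V \<Longrightarrow> c \<noteq> V!k \<Longrightarrow> differ_one V (V[k:=c])"
proof -
  assume a: "k < length V" "c \<noteq> V!k"
  have "{i. i < length V \<and> V!i \<noteq> V[k:=c]!i} = {k}" using a by (auto simp: nth_list_update)
  then show ?thesis unfolding differ_one_def by simp
qed

lemma differ_one_sym: "differ_one V W \<Longrightarrow> differ_one W V"
proof -
  assume a: "differ_one V W"
  then have "length V = length W" unfolding differ_one_def by simp
  then have "{i. i < length W \<and> W!i \<noteq> V!i} = {i. i < length V \<and> V!i \<noteq> W!i}" by auto
  note S = this
  have C: "card {i. i < length V \<and> V!i \<noteq> W!i} = 1" using a unfolding differ_one_def by blast
  have "card {i. i < length W \<and> W!i \<noteq> V!i} = 1" by (simp only: S) (rule C)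
  then show ?thesis using \<open>length V = length W\<close> unfolding differ_one_def by simp
qed

lemma differ_one_neq: "differ_one V W \<Longrightarrow> V \<noteq> W"
  unfolding differ_one_def by auto

fun hw :: "nat list \<Rightarrow> nat list \<Rightarrow> nat list list" where
  "hw (a#as) (b#bs) = (if a = b then map (Cons a) (hw as bs) else (a#as) # map (Cons b) (hw as bs))"
| "hw as bs = [as]"

lemma hw_ne[simp]: "hw W W' \<noteq> []"
  by (induction W W' rule: hw.induct) auto

lemma hw_hd[simp]: "hd (hw W W') = W"
  by (induction W W' rule: hw.induct) (auto simp: hd_map)

lemma hw_last[simp]: "length W = length W' \<Longrightarrow> last (hw W W') = W'"
  by (induction W W' rule: hw.induct) (auto simp: last_map)

lemma hw_distinct[simp]: "distinct (hw W W')"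
  by (induction W W' rule: hw.induct) (auto simp: distinct_map)

lemma hw_len: "length (hw W W') \<le> length W + 1"
  by (induction W W' rule: hw.induct) auto

lemma hw_set: "V \<in> set (hw W W') \<Longrightarrow> length V = length W \<and> set V \<subseteq> set W \<union> set W'"
proof (induction W W' arbitrary: V rule: hw.induct)
  case (1 a as b bs)
  then show ?case by (cases "a = b") fastforce+
qed auto

lemma hw_first: "W \<in> set (hw W W')"
  using hw_hd hw_ne by (metis list.set_sel(1))

lemma hw_succ: "length W = length W' \<Longrightarrow> successively differ_one (hw W W')"
proof (induction W W' rule: hw.induct)
  case (1 a as b bs)
  then have IH: "successively differ_one (hw as bs)" by (cases "a = b") auto
  have m: "successively differ_one (map (Cons c) (hw as bs))" for c
    unfolding successively_map using IH by (rule successively_mono) (simp add: differ_one_Cons_same)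
  have d: "a \<noteq> b \<Longrightarrow> differ_one (a#as) (b#as)"
    using differ_one_upd[of 0 "a#as" b] by simp
  show ?case using m d by (auto simp: successively_Cons hd_map)
qed auto

lemma tstr_hw: "tstr n W \<Longrightarrow> tstr n W' \<Longrightarrow> V \<in> set (hw W W') \<Longrightarrow> tstr n V"
  using hw_set unfolding tstr_def by blast



definition fvalid :: "nat \<Rightarrow> nat \<Rightarrow> nat \<Rightarrow> e3vert \<Rightarrow> bool" where
  "fvalid x y z w \<longleftrightarrow> (case w of (X,Y,Z,m) \<Rightarrow> tstr x X \<and> tstr y Y \<and> tstr z Z \<and> m < 3)"

definition fstep :: "e3vert \<Rightarrow> e3vert \<Rightarrow> bool" where
  "fstep a b \<longleftrightarrow> (case a of (X,Y,Z,m) \<Rightarrow> case b of (X',Y',Z',m') \<Rightarrow>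
     (X = X' \<and> Y = Y' \<and> Z = Z' \<and> m \<noteq> m' \<and> m < 3 \<and> m' < 3)
   \<or> (m = 0 \<and> m' = 0 \<and> Y = Y' \<and> Z = Z' \<and> differ_one X X')
   \<or> (m = 1 \<and> m' = 1 \<and> X = X' \<and> Z = Z' \<and> differ_one Y Y')
   \<or> (m = 2 \<and> m' = 2 \<and> X = X' \<and> Y = Y' \<and> differ_one Z Z'))"

lemma walk0: "length W = length W' \<Longrightarrow> successively fstep (map (\<lambda>X. (X,Y,Z,0)) (hw W W'))"
  unfolding successively_map by (rule successively_mono[OF hw_succ]) (auto simp: fstep_def)
lemma walk1: "length W = length W' \<Longrightarrow> successively fstep (map (\<lambda>Y. (X,Y,Z,1)) (hw W W'))"
  unfolding successively_map by (rule successively_mono[OF hw_succ]) (auto simp: fstep_def)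
lemma walk2: "length W = length W' \<Longrightarrow> successively fstep (map (\<lambda>Z. (X,Y,Z,2)) (hw W W'))"
  unfolding successively_map by (rule successively_mono[OF hw_succ]) (auto simp: fstep_def)

lemma third: "(a::nat) < 3 \<Longrightarrow> b < 3 \<Longrightarrow> a \<noteq> b \<Longrightarrow> 3 - a - b < 3 \<and> 3 - a - b \<noteq> a \<and> 3 - a - b \<noteq> b"
  by arith

lemma shift3: "(a::nat) < 3 \<Longrightarrow> (a + i mod 2 + 1) mod 3 \<noteq> a"
proof -
  assume "a < 3"
  then have "a = 0 \<or> a = 1 \<or> a = 2" by arith
  moreover have "i mod 2 = 0 \<or> i mod 2 = 1" by arith
  ultimately show ?thesis by (elim disjE) simp_all
qed

lemma shift3_inj: "(a::nat) < 3 \<Longrightarrow> (a + i mod 2 + 1) mod 3 = (a + j mod 2 + 1) mod 3 \<Longrightarrow> i mod 2 = j mod 2"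
proof -
  assume "a < 3" "(a + i mod 2 + 1) mod 3 = (a + j mod 2 + 1) mod 3"
  moreover have "a = 0 \<or> a = 1 \<or> a = 2" using \<open>a < 3\<close> by arith
  moreover have "i mod 2 = 0 \<or> i mod 2 = 1" by arith
  moreover have "j mod 2 = 0 \<or> j mod 2 = 1" by arith
  ultimately show ?thesis by (elim disjE) simp_all
qed

locale frame =
  fixes x y z r :: nat and X0 Y0 Z0 X1 Y1 Z1 :: "nat list"
  assumes tX0: "tstr x X0" and tY0: "tstr y Y0" and tZ0: "tstr z Z0"
    and tX1: "tstr x X1" and tY1: "tstr y Y1" and tZ1: "tstr z Z1"
    and dX: "X0 \<noteq> X1" and dY: "Y0 \<noteq> Y1" and dZ: "Z0 \<noteq> Z1"
    and rx: "r \<le> x" and ry: "r \<le> y"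
begin

definition u :: e3vert where "u = (X0,Y0,Z0,0)"
definition v :: e3vert where "v = (X1,Y1,Z1,1)"
definition \<alpha> :: "nat \<Rightarrow> nat list" where "\<alpha> i = X0[i div 2 := (X0!(i div 2) + i mod 2 + 1) mod 3]"
definition \<beta> :: "nat \<Rightarrow> nat list" where "\<beta> i = Y1[i div 2 := (Y1!(i div 2) + i mod 2 + 1) mod 3]"
definition kz :: nat where "kz = (SOME k. k < length Z0 \<and> Z0!k \<noteq> Z1!k)"
definition Zm :: "nat list" where "Zm = Z0[kz := 3 - Z0!kz - Z1!kz]"

lemma lens: "length X0 = x" "length X1 = x" "length Y0 = y" "length Y1 = y" "length Z0 = z" "length Z1 = z"
  using tX0 tX1 tY0 tY1 tZ0 tZ1 by (auto simp: tstr_def)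

lemma kz: "kz < length Z0 \<and> Z0!kz \<noteq> Z1!kz"
proof -
  have "\<exists>k. k < length Z0 \<and> Z0!k \<noteq> Z1!k"
  proof (rule ccontr)
    assume "\<not> ?thesis"
    then have "Z0 = Z1" by (intro nth_equalityI) (auto simp: lens)
    with dZ show False by simp
  qed
  then show ?thesis unfolding kz_def by (rule someI_ex)
qed

lemma Zm: "tstr z Zm" "Zm \<noteq> Z0" "Zm \<noteq> Z1" "differ_one Z0 Zm"
proof -
  have k: "kz < length Z0" and ne: "Z0!kz \<noteq> Z1!kz" using kz by blast+
  have a1: "Z0!kz < 3" using k tZ0 unfolding tstr_def by simp
  have a2: "Z1!kz < 3" using k tZ1 lens unfolding tstr_def by simp
  have t: "3 - Z0!kz - Z1!kz < 3" "3 - Z0!kz - Z1!kz \<noteq> Z0!kz" "3 - Z0!kz - Z1!kz \<noteq> Z1!kz"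
    using third[OF a1 a2 ne] by blast+
  have len: "length Zm = z" by (simp add: Zm_def lens)
  have sub: "set Zm \<subseteq> insert (3 - Z0!kz - Z1!kz) (set Z0)" unfolding Zm_def by (rule set_update_subset_insert)
  have "\<forall>c\<in>set Z0. c < 3" using tZ0 unfolding tstr_def by blast
  then show "tstr z Zm" unfolding tstr_def using len sub t(1) by blast
  have e: "Zm!kz = 3 - Z0!kz - Z1!kz" using k by (simp add: Zm_def)
  show "Zm \<noteq> Z0" proof assume "Zm = Z0" then show False using e t(2) by simp qed
  show "Zm \<noteq> Z1" proof assume "Zm = Z1" then show False using e t(3) by simp qed
  show "differ_one Z0 Zm" unfolding Zm_def using k t(2) by (rule differ_one_upd)
qed

lemma alpha: assumes "i < 2*r" shows "tstr x (\<alpha> i)" "\<alpha> i \<noteq> X0" "differ_one X0 (\<alpha> i)"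
proof -
  have "i div 2 < r" using assms by presburger
  then have k: "i div 2 < length X0" using rx lens by linarith
  have a: "X0!(i div 2) < 3" using k tX0 unfolding tstr_def by simp
  have t: "(X0!(i div 2) + i mod 2 + 1) mod 3 \<noteq> X0!(i div 2)" using shift3[OF a] .
  have len: "length (\<alpha> i) = x" by (simp add: \<alpha>_def lens)
  have sub: "set (\<alpha> i) \<subseteq> insert ((X0!(i div 2) + i mod 2 + 1) mod 3) (set X0)" unfolding \<alpha>_def by (rule set_update_subset_insert)
  have "\<forall>c\<in>set X0. c < 3" using tX0 unfolding tstr_def by blast
  then show "tstr x (\<alpha> i)" unfolding tstr_def using len sub by auto
  have e: "\<alpha> i!(i div 2) = (X0!(i div 2) + i mod 2 + 1) mod 3" using k by (simp add: \<alpha>_def)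
  show "\<alpha> i \<noteq> X0" proof assume "\<alpha> i = X0" then show False using e t by simp qed
  show "differ_one X0 (\<alpha> i)" unfolding \<alpha>_def using k t by (rule differ_one_upd) 
qed

lemma beta: assumes "i < 2*r" shows "tstr y (\<beta> i)" "\<beta> i \<noteq> Y1" "differ_one (\<beta> i) Y1"
proof -
  have "i div 2 < r" using assms by presburger
  then have k: "i div 2 < length Y1" using ry lens by linarith
  have a: "Y1!(i div 2) < 3" using k tY1 unfolding tstr_def by simp
  have t: "(Y1!(i div 2) + i mod 2 + 1) mod 3 \<noteq> Y1!(i div 2)" using shift3[OF a] .
  have len: "length (\<beta> i) = y" by (simp add: \<beta>_def lens)
  have sub: "set (\<beta> i) \<subseteq> insert ((Y1!(i div 2) + i mod 2 + 1) mod 3) (set Y1)" unfolding \<beta>_def by (rule set_update_subset_insert)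
  have "\<forall>c\<in>set Y1. c < 3" using tY1 unfolding tstr_def by blast
  then show "tstr y (\<beta> i)" unfolding tstr_def using len sub by auto
  have e: "\<beta> i!(i div 2) = (Y1!(i div 2) + i mod 2 + 1) mod 3" using k by (simp add: \<beta>_def)
  show "\<beta> i \<noteq> Y1" proof assume "\<beta> i = Y1" then show False using e t by simp qed
  show "differ_one (\<beta> i) Y1" unfolding \<beta>_def by (rule differ_one_sym[OF differ_one_upd[OF k t]])
qed

lemma upd_inj:
  assumes "i < 2*r" "j < 2*r" "2*r \<le> 2 * length W" "\<forall>a\<in>set W. a < 3"
    and "W[i div 2 := (W!(i div 2) + i mod 2 + 1) mod 3] = W[j div 2 := (W!(j div 2) + j mod 2 + 1) mod 3]"
  shows "i = j"
proof -
  have ki: "i div 2 < length W" and kj: "j div 2 < length W" using assms(1-3) by auto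
  have ai: "W!(i div 2) < 3" and aj: "W!(j div 2) < 3" using ki kj assms(4) by auto
  show ?thesis
  proof (cases "i div 2 = j div 2")
    case True
    then have "(W!(i div 2) + i mod 2 + 1) mod 3 = (W!(i div 2) + j mod 2 + 1) mod 3"
      using arg_cong[OF assms(5), of "\<lambda>L. L!(i div 2)"] ki by simp
    then have "i mod 2 = j mod 2" using shift3_inj[OF ai] by blast
    then show ?thesis using True by (metis div_mult_mod_eq)
  next
    case False
    then have "(W!(i div 2) + i mod 2 + 1) mod 3 = W!(i div 2)"
      using arg_cong[OF assms(5), of "\<lambda>L. L!(i div 2)"] ki by simp
    then show ?thesis using shift3[OF ai] by blast
  qed
qed

lemma alpha_inj: "i < 2*r \<Longrightarrow> j < 2*r \<Longrightarrow> \<alpha> i = \<alpha> j \<Longrightarrow> i = j"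
  unfolding \<alpha>_def using upd_inj[of i j X0] rx lens tX0 unfolding tstr_def by auto

lemma beta_inj: "i < 2*r \<Longrightarrow> j < 2*r \<Longrightarrow> \<beta> i = \<beta> j \<Longrightarrow> i = j"
  unfolding \<beta>_def using upd_inj[of i j Y1] ry lens tY1 unfolding tstr_def by auto

definition mainp :: "nat \<Rightarrow> e3vert list" where
  "mainp i = [u, (\<alpha> i, Y0, Z0, 0)] @ map (\<lambda>Y. (\<alpha> i, Y, Z0, 1)) (hw Y0 (\<beta> i))
     @ map (\<lambda>Z. (\<alpha> i, \<beta> i, Z, 2)) (hw Z0 Z1) @ map (\<lambda>X. (X, \<beta> i, Z1, 0)) (hw (\<alpha> i) X1)
     @ [(X1, \<beta> i, Z1, 1), v]"

definition F1p :: "e3vert list" where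
  "F1p = [u] @ map (\<lambda>Y. (X0, Y, Z0, 1)) (hw Y0 Y1) @ map (\<lambda>Z. (X0, Y1, Z, 2)) (hw Z0 Z1)
     @ map (\<lambda>X. (X, Y1, Z1, 0)) (hw X0 X1) @ [v]"

definition F2p :: "e3vert list" where
  "F2p = [u, (X0, Y0, Z0, 2), (X0, Y0, Zm, 2)] @ map (\<lambda>Y. (X0, Y, Zm, 1)) (hw Y0 Y1)
     @ map (\<lambda>X. (X, Y1, Zm, 0)) (hw X0 X1) @ map (\<lambda>Z. (X1, Y1, Z, 2)) (hw Zm Z1) @ [v]"

definition fpath :: "e3vert list \<Rightarrow> bool" where
  "fpath p \<longleftrightarrow> p \<noteq> [] \<and> hd p = u \<and> last p = v \<and> distinct p \<and> (\<forall>w\<in>set p. fvalid x y z w)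
     \<and> successively fstep p"

end


lemma fstep_sw: "m \<noteq> m' \<Longrightarrow> m < 3 \<Longrightarrow> m' < 3 \<Longrightarrow> fstep (X,Y,Z,m) (X,Y,Z,m')"
  by (simp add: fstep_def)
lemma fstep_0: "differ_one X X' \<Longrightarrow> fstep (X,Y,Z,0) (X',Y,Z,0)"
  by (simp add: fstep_def)
lemma fstep_1: "differ_one Y Y' \<Longrightarrow> fstep (X,Y,Z,1) (X,Y',Z,1)"
  by (simp add: fstep_def)
lemma fstep_2: "differ_one Z Z' \<Longrightarrow> fstep (X,Y,Z,2) (X,Y,Z',2)"
  by (simp add: fstep_def)
lemma fstep_1': "differ_one Y Y' \<Longrightarrow> fstep (X,Y,Z,Suc 0) (X,Y',Z,Suc 0)"
  by (simp add: fstep_def)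
lemmas fsteps = fstep_sw fstep_0 fstep_1 fstep_1' fstep_2

context frame begin
lemma main_ok: assumes "i < 2*r" shows "fpath (mainp i)" "length (mainp i) \<le> x + y + z + 7"
proof -
  note A = alpha[OF assms] and B = beta[OF assms]
  have lA: "length (\<alpha> i) = x" and lB: "length (\<beta> i) = y" using A B unfolding tstr_def by auto
  note L = lens lA lB
  show "length (mainp i) \<le> x + y + z + 7" unfolding mainp_def
    using hw_len[of Y0 "\<beta> i"] hw_len[of Z0 Z1] hw_len[of "\<alpha> i" X1] L by simp
  have s: "successively fstep (mainp i)" unfolding mainp_def
    using A B L walk0[of "\<alpha> i" X1 "\<beta> i" Z1] walk1[of Y0 "\<beta> i" "\<alpha> i" Z0] walk2[of Z0 Z1 "\<alpha> i" "\<beta> i"]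
    by (simp add: successively_append_iff successively_Cons hd_append hd_map last_map fsteps u_def v_def)
  have vd: "\<forall>w\<in>set (mainp i). fvalid x y z w" unfolding mainp_def
    using A B tX0 tY0 tZ0 tX1 tY1 tZ1 tstr_hw[of y Y0 "\<beta> i"] tstr_hw[of z Z0 Z1] tstr_hw[of x "\<alpha> i" X1]
    by (auto simp: fvalid_def u_def v_def)
  have d: "distinct (mainp i)" unfolding mainp_def
    using A B dX dY dZ by (auto simp: distinct_map inj_on_def u_def v_def)
  show "fpath (mainp i)" unfolding fpath_def using s vd d L by (simp add: mainp_def u_def v_def)
qed

lemma F1_ok: shows "fpath F1p" "length F1p \<le> x + y + z + 7"
proof -
  note L = lens
  show "length F1p \<le> x + y + z + 7" unfolding F1p_def
    using hw_len[of Y0 Y1] hw_len[of Z0 Z1] hw_len[of X0 X1] L by simp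
  have s: "successively fstep F1p" unfolding F1p_def
    using L walk0[of X0 X1 Y1 Z1] walk1[of Y0 Y1 X0 Z0] walk2[of Z0 Z1 X0 Y1]
    by (simp add: successively_append_iff successively_Cons hd_append hd_map last_map fsteps u_def v_def)
  have vd: "\<forall>w\<in>set F1p. fvalid x y z w" unfolding F1p_def
    using tX0 tY0 tZ0 tX1 tY1 tZ1 tstr_hw[of y Y0 Y1] tstr_hw[of z Z0 Z1] tstr_hw[of x X0 X1]
    by (auto simp: fvalid_def u_def v_def)
  have d: "distinct F1p" unfolding F1p_def
    using dX dY dZ by (auto simp: distinct_map inj_on_def u_def v_def)
  show "fpath F1p" unfolding fpath_def using s vd d L by (simp add: F1p_def u_def v_def)
qed

lemma F2_ok: shows "fpath F2p" "length F2p \<le> x + y + z + 7"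
proof -
  note L = lens
  have lZ: "length Zm = z" using Zm unfolding tstr_def by auto
  show "length F2p \<le> x + y + z + 7" unfolding F2p_def
    using hw_len[of Y0 Y1] hw_len[of Zm Z1] hw_len[of X0 X1] L lZ by simp
  have s: "successively fstep F2p" unfolding F2p_def
    using L lZ Zm walk0[of X0 X1 Y1 Zm] walk1[of Y0 Y1 X0 Zm] walk2[of Zm Z1 X1 Y1]
    by (simp add: successively_append_iff successively_Cons hd_append hd_map last_map fsteps u_def v_def)
  have vd: "\<forall>w\<in>set F2p. fvalid x y z w" unfolding F2p_def
    using Zm tX0 tY0 tZ0 tX1 tY1 tZ1 tstr_hw[of y Y0 Y1] tstr_hw[of z Zm Z1] tstr_hw[of x X0 X1]
    by (auto simp: fvalid_def u_def v_def)
  have d: "distinct F2p" unfolding F2p_def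
    using Zm dX dY dZ by (auto simp: distinct_map inj_on_def u_def v_def)
  show "fpath F2p" unfolding fpath_def using s vd d L lZ by (simp add: F2p_def u_def v_def)
qed


definition inM :: "nat list \<Rightarrow> nat list \<Rightarrow> e3vert \<Rightarrow> bool" where
  "inM a b w \<longleftrightarrow> w = (a,Y0,Z0,0) \<or> (\<exists>Y. w = (a,Y,Z0,1)) \<or> (\<exists>Z. w = (a,b,Z,2))
     \<or> (\<exists>X. w = (X,b,Z1,0)) \<or> w = (X1,b,Z1,1)"
definition inF1 :: "e3vert \<Rightarrow> bool" where
  "inF1 w \<longleftrightarrow> (\<exists>Y. w = (X0,Y,Z0,1)) \<or> (\<exists>Z. w = (X0,Y1,Z,2)) \<or> (\<exists>X. w = (X,Y1,Z1,0))"
definition inF2 :: "e3vert \<Rightarrow> bool" where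
  "inF2 w \<longleftrightarrow> (\<exists>Z. w = (X0,Y0,Z,2)) \<or> (\<exists>Y. w = (X0,Y,Zm,1)) \<or> (\<exists>X. w = (X,Y1,Zm,0))
     \<or> (\<exists>Z. w = (X1,Y1,Z,2))"
definition pth :: "nat \<Rightarrow> e3vert list" where
  "pth i = (if i < 2*r then mainp i else if i = 2*r then F1p else F2p)"
definition inT :: "nat \<Rightarrow> e3vert \<Rightarrow> bool" where
  "inT i w = (if i < 2*r then inM (\<alpha> i) (\<beta> i) w else if i = 2*r then inF1 w else inF2 w)"

lemma set_main: "set (mainp i) \<subseteq> {u,v} \<union> Collect (inM (\<alpha> i) (\<beta> i))"
  unfolding mainp_def inM_def by auto
lemma set_F1: "set F1p \<subseteq> {u,v} \<union> Collect inF1"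
  unfolding F1p_def inF1_def by auto
lemma set_F2: "set F2p \<subseteq> {u,v} \<union> Collect inF2"
  unfolding F2p_def inF2_def by auto

lemma set_pth: "set (pth i) \<subseteq> {u,v} \<union> Collect (inT i)"
  using set_main[of i] set_F1 set_F2 unfolding pth_def inT_def by auto

lemma inM_inM: "inM a b w \<Longrightarrow> inM a' b' w \<Longrightarrow> a = a' \<or> b = b'"
  unfolding inM_def using dZ by auto

lemma inM_F1: "a \<noteq> X0 \<Longrightarrow> b \<noteq> Y1 \<Longrightarrow> inM a b w \<Longrightarrow> inF1 w \<Longrightarrow> False"
  unfolding inM_def inF1_def using dZ dX by auto

lemma inM_F2: "a \<noteq> X0 \<Longrightarrow> b \<noteq> Y1 \<Longrightarrow> inM a b w \<Longrightarrow> inF2 w \<Longrightarrow> False"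
  unfolding inM_def inF2_def using dZ dX dY by auto

lemma F1_F2: "inF1 w \<Longrightarrow> inF2 w \<Longrightarrow> False"
  unfolding inF1_def inF2_def using dZ dX dY Zm by auto

lemma inT_disj: assumes "i \<noteq> j" "i < 2*r+2" "j < 2*r+2" "inT i w" "inT j w" shows False
proof -
  consider "i < 2*r" "j < 2*r" | "i < 2*r" "j \<ge> 2*r" | "i \<ge> 2*r" "j < 2*r" | "i \<ge> 2*r" "j \<ge> 2*r" by linarith
  then show False
  proof cases
    case 1
    then have "\<alpha> i = \<alpha> j \<or> \<beta> i = \<beta> j" using assms inM_inM unfolding inT_def by auto
    then show False using alpha_inj beta_inj 1 assms(1) by blast
  next
    case 2
    have m: "inM (\<alpha> i) (\<beta> i) w" using assms(4) 2 by (simp add: inT_def)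
    have "inF1 w \<or> inF2 w" using assms(5) 2 by (simp add: inT_def split: if_splits)
    then show False using inM_F1[OF alpha(2)[OF 2(1)] beta(2)[OF 2(1)] m] inM_F2[OF alpha(2)[OF 2(1)] beta(2)[OF 2(1)] m] by blast
  next
    case 3
    have m: "inM (\<alpha> j) (\<beta> j) w" using assms(5) 3 by (simp add: inT_def)
    have "inF1 w \<or> inF2 w" using assms(4) 3 by (simp add: inT_def split: if_splits)
    then show False using inM_F1[OF alpha(2)[OF 3(2)] beta(2)[OF 3(2)] m] inM_F2[OF alpha(2)[OF 3(2)] beta(2)[OF 3(2)] m] by blast
  next
    case 4
    then have "(i = 2*r \<and> j = 2*r+1) \<or> (i = 2*r+1 \<and> j = 2*r)" using assms by linarith
    then have "inF1 w \<and> inF2 w" using assms unfolding inT_def by auto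
    then show False using F1_F2 by blast
  qed
qed

lemma wit: assumes "i < 2*r+2" shows "\<exists>w\<in>set (pth i). inT i w \<and> w \<notin> {u,v}"
proof -
  consider "i < 2*r" | "i = 2*r" | "i = 2*r+1" using assms by linarith
  then show ?thesis
  proof cases
    case 1
    then show ?thesis using alpha[OF 1] dZ
      by (intro bexI[of _ "(\<alpha> i, Y0, Z0, 0)"]) (auto simp: pth_def mainp_def inT_def inM_def u_def v_def)
  next
    case 2
    have "Y0 \<in> set (hw Y0 Y1)" by (rule hw_first)
    then show ?thesis using 2 dX
      by (intro bexI[of _ "(X0, Y0, Z0, 1)"]) (auto simp: pth_def F1p_def inT_def inF1_def u_def v_def)
  next
    case 3
    then show ?thesis using dX
      by (intro bexI[of _ "(X0, Y0, Z0, 2)"]) (auto simp: pth_def F2p_def inT_def inF2_def u_def v_def)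
  qed
qed

lemma pth_ok: "i < 2*r+2 \<Longrightarrow> fpath (pth i) \<and> length (pth i) \<le> x + y + z + 7"
  using main_ok F1_ok F2_ok unfolding pth_def by auto

theorem frame_paths: "\<exists>P. length P = 2*r+2 \<and> distinct P \<and> (\<forall>p\<in>set P. fpath p \<and> length p \<le> x + y + z + 7)
   \<and> (\<forall>i<length P. \<forall>j<length P. i \<noteq> j \<longrightarrow> set (P!i) \<inter> set (P!j) \<subseteq> {u,v})"
proof (intro exI[of _ "map pth [0..<2*r+2]"] conjI)
  show "length (map pth [0..<2*r+2]) = 2*r+2" by simp
  show "\<forall>p\<in>set (map pth [0..<2*r+2]). fpath p \<and> length p \<le> x + y + z + 7"
    using pth_ok by auto
  have I: "set (pth i) \<inter> set (pth j) \<subseteq> {u,v}" if "i \<noteq> j" "i < 2*r+2" "j < 2*r+2" for i j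
    using set_pth[of i] set_pth[of j] inT_disj[OF that] by blast
  show "\<forall>i<length (map pth [0..<2*r+2]). \<forall>j<length (map pth [0..<2*r+2]). i \<noteq> j \<longrightarrow>
      set (map pth [0..<2*r+2] ! i) \<inter> set (map pth [0..<2*r+2] ! j) \<subseteq> {u,v}"
  proof (intro allI impI)
    fix i j assume "i < length (map pth [0..<2*r+2])" "j < length (map pth [0..<2*r+2])" "i \<noteq> j"
    then show "set (map pth [0..<2*r+2] ! i) \<inter> set (map pth [0..<2*r+2] ! j) \<subseteq> {u,v}"
      using I[of i j] by (simp del: upt_Suc)
  qed
  show "distinct (map pth [0..<2*r+2])"
  proof (rule distinct_conv_nth[THEN iffD2], intro allI impI)
    fix i j assume a: "i < length (map pth [0..<2*r+2])" "j < length (map pth [0..<2*r+2])" "i \<noteq> j"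
    then have a': "i < 2*r+2" "j < 2*r+2" by auto
    obtain w where w: "w \<in> set (pth i)" "inT i w" "w \<notin> {u,v}" using wit[OF a'(1)] by blast
    show "map pth [0..<2*r+2] ! i \<noteq> map pth [0..<2*r+2] ! j"
    proof
      assume "map pth [0..<2*r+2] ! i = map pth [0..<2*r+2] ! j"
      then have "pth i = pth j" using a' by (simp del: upt_Suc)
      then have "w \<in> set (pth j)" using w by simp
      then have "inT j w" using set_pth[of j] w(3) by blast
      then show False using inT_disj[OF a(3) a' w(2)] by blast
    qed
  qed
qed

end



definition lay :: "nat \<Rightarrow> nat \<Rightarrow> nat \<Rightarrow> nat" where
  "lay d d' m = (if m = 0 then d else if m = 1 then d' else 3 - d - d')"
definition pick :: "nat \<Rightarrow> nat \<Rightarrow> nat \<Rightarrow> nat list \<Rightarrow> nat list \<Rightarrow> nat list \<Rightarrow> nat list" where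
  "pick d d' l X Y Z = (if l = d then X else if l = d' then Y else Z)"
definition Fm :: "nat \<Rightarrow> nat \<Rightarrow> e3vert \<Rightarrow> e3vert" where
  "Fm d d' w = (case w of (X,Y,Z,m) \<Rightarrow> (pick d d' 2 X Y Z, pick d d' 1 X Y Z, pick d d' 0 X Y Z, lay d d' m))"
definition Ln :: "nat \<Rightarrow> nat \<Rightarrow> nat \<Rightarrow> nat \<Rightarrow> nat" where
  "Ln r s t l = (if l = 2 then r else if l = 1 then s else t)"
definition compo :: "nat \<Rightarrow> nat list \<Rightarrow> nat list \<Rightarrow> nat list \<Rightarrow> nat list" where
  "compo l A B C = (if l = 2 then A else if l = 1 then B else C)"

lemma dd_cases: "(d::nat) < 3 \<Longrightarrow> d' < 3 \<Longrightarrow> d \<noteq> d' \<Longrightarrow>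
  (d = 0 \<and> d' = 1) \<or> (d = 0 \<and> d' = 2) \<or> (d = 1 \<and> d' = 0) \<or> (d = 1 \<and> d' = 2) \<or> (d = 2 \<and> d' = 0) \<or> (d = 2 \<and> d' = 1)"
  by arith

lemma m_cases: "(m::nat) < 3 \<Longrightarrow> m = 0 \<or> m = 1 \<or> m = 2" by arith

lemma T_verts:
  assumes "d < 3" "d' < 3" "d \<noteq> d'" "fvalid (Ln r s t d) (Ln r s t d') (Ln r s t (3-d-d')) w"
  shows "Fm d d' w \<in> e3c_verts r s t"
proof -
  obtain X Y Z m where w: "w = (X,Y,Z,m)" by (cases w)
  have m: "m = 0 \<or> m = 1 \<or> m = 2" using assms(4) w m_cases by (simp add: fvalid_def)
  show ?thesis using dd_cases[OF assms(1-3)] m assms(4) unfolding w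
    by (elim disjE) (simp_all add: Fm_def pick_def lay_def Ln_def fvalid_def e3c_verts_def)
qed

lemma T_inj:
  assumes "d < 3" "d' < 3" "d \<noteq> d'" "fvalid x y z a" "fvalid x' y' z' b" "Fm d d' a = Fm d d' b"
  shows "a = b"
proof -
  obtain X Y Z m where a: "a = (X,Y,Z,m)" by (cases a)
  obtain X' Y' Z' m' where b: "b = (X',Y',Z',m')" by (cases b)
  have m: "m = 0 \<or> m = 1 \<or> m = 2" using assms(4) a m_cases by (simp add: fvalid_def)
  have m': "m' = 0 \<or> m' = 1 \<or> m' = 2" using assms(5) b m_cases by (simp add: fvalid_def)
  show ?thesis using dd_cases[OF assms(1-3)] m m' assms(6) unfolding a b
    by (elim disjE) (simp_all add: Fm_def pick_def lay_def)
qed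

lemma fstep_neq: "fstep a b \<Longrightarrow> a \<noteq> b"
  by (cases a; cases b) (auto simp: fstep_def dest: differ_one_neq)

lemma T_adj:
  assumes "d < 3" "d' < 3" "d \<noteq> d'" and va: "fvalid (Ln r s t d) (Ln r s t d') (Ln r s t (3-d-d')) a"
    and vb: "fvalid (Ln r s t d) (Ln r s t d') (Ln r s t (3-d-d')) b" and st: "fstep a b"
  shows "e3c_adj r s t (Fm d d' a) (Fm d d' b)"
proof -
  have ne: "Fm d d' a \<noteq> Fm d d' b" using T_inj[OF assms(1-3) va vb] fstep_neq[OF st] by blast
  obtain X Y Z m where a: "a = (X,Y,Z,m)" by (cases a)
  obtain X' Y' Z' m' where b: "b = (X',Y',Z',m')" by (cases b)
  have m: "m = 0 \<or> m = 1 \<or> m = 2" using va a m_cases by (simp add: fvalid_def)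
  have m': "m' = 0 \<or> m' = 1 \<or> m' = 2" using vb b m_cases by (simp add: fvalid_def)
  have c: "case Fm d d' a of (A,B,C,l) \<Rightarrow> case Fm d d' b of (A',B',C',l') \<Rightarrow>
        (A = A' \<and> B = B' \<and> C = C' \<and> l \<noteq> l')
      \<or> (l = 0 \<and> l' = 0 \<and> A = A' \<and> B = B' \<and> differ_one C C')
      \<or> (l = 1 \<and> l' = 1 \<and> A = A' \<and> C = C' \<and> differ_one B B')
      \<or> (l = 2 \<and> l' = 2 \<and> B = B' \<and> C = C' \<and> differ_one A A')"
    using dd_cases[OF assms(1-3)] m m' st unfolding a b
    by (elim disjE) (simp_all add: Fm_def pick_def lay_def fstep_def)
  show ?thesis unfolding e3c_adj_def using T_verts[OF assms(1-3) va] T_verts[OF assms(1-3) vb] ne c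
    by simp
qed

lemma T_u: "d < 3 \<Longrightarrow> d' < 3 \<Longrightarrow> d \<noteq> d' \<Longrightarrow>
  Fm d d' (compo d A B C, compo d' A B C, compo (3-d-d') A B C, 0) = (A,B,C,d)"
  by (drule (2) dd_cases) (elim disjE; simp add: Fm_def pick_def lay_def compo_def)

lemma T_v: "d < 3 \<Longrightarrow> d' < 3 \<Longrightarrow> d \<noteq> d' \<Longrightarrow>
  Fm d d' (compo d A B C, compo d' A B C, compo (3-d-d') A B C, 1) = (A,B,C,d')"
  by (drule (2) dd_cases) (elim disjE; simp add: Fm_def pick_def lay_def compo_def)

lemma compo_tstr: "tstr r A \<Longrightarrow> tstr s B \<Longrightarrow> tstr t C \<Longrightarrow> tstr (Ln r s t l) (compo l A B C)"
  by (simp add: Ln_def compo_def)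

lemma compo_neq: "A \<noteq> A' \<Longrightarrow> B \<noteq> B' \<Longrightarrow> C \<noteq> C' \<Longrightarrow> compo l A B C \<noteq> compo l A' B' C'"
  by (simp add: compo_def)

lemma Ln_ge: "r \<le> s \<Longrightarrow> s \<le> t \<Longrightarrow> r \<le> Ln r s t l"
  by (simp add: Ln_def)

lemma Ln_sum: "d < 3 \<Longrightarrow> d' < 3 \<Longrightarrow> d \<noteq> d' \<Longrightarrow> Ln r s t d + Ln r s t d' + Ln r s t (3-d-d') = r + s + t"
  by (drule (2) dd_cases) (elim disjE; simp add: Ln_def)

theorem lemma21:
  fixes r s t :: nat and A B C A' B' C' :: "nat list" and d d' :: nat
  assumes "1 \<le> r" "r \<le> s" "s \<le> t"
    and "(A,B,C,d) \<in> e3c_verts r s t" "(A',B',C',d') \<in> e3c_verts r s t"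
    and "A \<noteq> A'" "B \<noteq> B'" "C \<noteq> C'" "d \<noteq> d'"
  shows "\<exists>P :: e3vert list list. length P = 2 * r + 2 \<and> distinct P \<and>
    (\<forall>p\<in>set P. e3c_path r s t (A,B,C,d) (A',B',C',d') p \<and> path_len p \<le> r + s + t + 6) \<and>
    (\<forall>i<length P. \<forall>j<length P. i \<noteq> j \<longrightarrow>
        set (P ! i) \<inter> set (P ! j) \<subseteq> {(A,B,C,d), (A',B',C',d')})"
proof -
  have tA: "tstr r A" "tstr s B" "tstr t C" "d < 3" using assms(4) by (auto simp: e3c_verts_def)
  have tA': "tstr r A'" "tstr s B'" "tstr t C'" "d' < 3" using assms(5) by (auto simp: e3c_verts_def)
  note dd = tA(4) tA'(4) assms(9)
  define e where "e = 3 - d - d'"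
  define x where "x = Ln r s t d"
  define y where "y = Ln r s t d'"
  define z where "z = Ln r s t e"
  define F where "F = Fm d d'"
  define X0 where "X0 = compo d A B C"
  define Y0 where "Y0 = compo d' A B C"
  define Z0 where "Z0 = compo e A B C"
  define X1 where "X1 = compo d A' B' C'"
  define Y1 where "Y1 = compo d' A' B' C'"
  define Z1 where "Z1 = compo e A' B' C'"
  interpret fr: frame x y z r X0 Y0 Z0 X1 Y1 Z1
    unfolding frame_def x_def y_def z_def X0_def Y0_def Z0_def X1_def Y1_def Z1_def
    using compo_tstr[OF tA(1-3)] compo_tstr[OF tA'(1-3)] compo_neq[OF assms(6-8)] Ln_ge[OF assms(2,3)]
    by blast
  obtain P where P: "length P = 2*r+2" "distinct P" "\<forall>p\<in>set P. fr.fpath p \<and> length p \<le> x + y + z + 7"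
    "\<forall>i<length P. \<forall>j<length P. i \<noteq> j \<longrightarrow> set (P!i) \<inter> set (P!j) \<subseteq> {fr.u, fr.v}"
    using fr.frame_paths by blast
  define V where "V = {w. fvalid x y z w}"
  have injV: "inj_on F V"
    unfolding inj_on_def V_def F_def using T_inj[OF dd] by blast
  have "fr.u = (X0,Y0,Z0,0)" by (rule fr.u_def)
  then have Fu: "F fr.u = (A,B,C,d)" by (simp only: F_def X0_def Y0_def Z0_def e_def T_u[OF dd])
  have "fr.v = (X1,Y1,Z1,1)" by (rule fr.v_def)
  then have Fv: "F fr.v = (A',B',C',d')" by (simp only: F_def X1_def Y1_def Z1_def e_def T_v[OF dd])
  have sumL: "x + y + z = r + s + t" unfolding x_def y_def z_def e_def using Ln_sum[OF dd] .
  have PV: "set p \<subseteq> V" if "p \<in> set P" for p using P(3) that unfolding fr.fpath_def V_def by blast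
  have good: "e3c_path r s t (A,B,C,d) (A',B',C',d') (map F p) \<and> path_len (map F p) \<le> r + s + t + 6"
    if p: "p \<in> set P" for p
  proof -
    have fp: "fr.fpath p" and lp: "length p \<le> x + y + z + 7" using P(3) p by auto
    have ne: "p \<noteq> []" and hd: "hd p = fr.u" and lt: "last p = fr.v" and ds: "distinct p"
      and vl: "\<forall>w\<in>set p. fvalid x y z w" and sc: "successively fstep p"
      using fp unfolding fr.fpath_def by auto
    have "distinct (map F p)" using ds injV PV[OF p] by (simp add: distinct_map inj_on_subset)
    moreover have "set (map F p) \<subseteq> e3c_verts r s t"
      using vl T_verts[OF dd] unfolding F_def x_def y_def z_def e_def by auto
    moreover have "\<forall>i. Suc i < length (map F p) \<longrightarrow> e3c_adj r s t (map F p ! i) (map F p ! Suc i)"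
    proof (intro allI impI)
      fix i assume i: "Suc i < length (map F p)"
      then have i': "Suc i < length p" by simp
      have "fstep (p!i) (p!Suc i)" using successively_nth[OF sc i'] .
      moreover have "fvalid x y z (p!i)" "fvalid x y z (p!Suc i)" using vl i' by auto
      ultimately have "e3c_adj r s t (F (p!i)) (F (p!Suc i))"
        unfolding F_def x_def y_def z_def e_def using T_adj[OF dd] by blast
      then show "e3c_adj r s t (map F p ! i) (map F p ! Suc i)" using i' by simp
    qed
    ultimately have "e3c_path r s t (A,B,C,d) (A',B',C',d') (map F p)"
      unfolding e3c_path_def using ne hd lt Fu Fv by (simp add: hd_map last_map)
    moreover have "path_len (map F p) \<le> r + s + t + 6" unfolding path_len_def using lp sumL by simp
    ultimately show ?thesis by blast
  qed
  show ?thesis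
  proof (intro exI[of _ "map (map F) P"] conjI)
    show "length (map (map F) P) = 2 * r + 2" using P(1) by simp
    show "distinct (map (map F) P)"
    proof -
      have "inj_on (map F) (set P)"
      proof (rule inj_onI)
        fix p q assume pq: "p \<in> set P" "q \<in> set P" "map F p = map F q"
        have sub: "set p \<union> set q \<subseteq> V" using PV[OF pq(1)] PV[OF pq(2)] by (rule Un_least)
        have ii: "inj_on F (set p \<union> set q)" by (rule inj_on_subset[OF injV sub])
        show "p = q" using pq(3) inj_on_map_eq_map[OF ii] by simp
      qed
      then show ?thesis using P(2) by (simp add: distinct_map)
    qed
    show "\<forall>p\<in>set (map (map F) P). e3c_path r s t (A,B,C,d) (A',B',C',d') p \<and> path_len p \<le> r + s + t + 6"
    proof
      fix q assume "q \<in> set (map (map F) P)"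
      then obtain p where "p \<in> set P" "q = map F p" by auto
      then show "e3c_path r s t (A,B,C,d) (A',B',C',d') q \<and> path_len q \<le> r + s + t + 6" using good by blast
    qed
    show "\<forall>i<length (map (map F) P). \<forall>j<length (map (map F) P). i \<noteq> j \<longrightarrow>
        set (map (map F) P ! i) \<inter> set (map (map F) P ! j) \<subseteq> {(A,B,C,d), (A',B',C',d')}"
    proof (intro allI impI)
      fix i j assume ij: "i < length (map (map F) P)" "j < length (map (map F) P)" "i \<noteq> j"
      then have ij': "i < length P" "j < length P" by auto
      have s1: "set (P!i) \<subseteq> V" "set (P!j) \<subseteq> V" using PV ij' by auto
      have e1: "set (map (map F) P ! i) = F ` set (P!i)" using ij'(1) by simp
      have e2: "set (map (map F) P ! j) = F ` set (P!j)" using ij'(2) by simp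
      have "set (map (map F) P ! i) \<inter> set (map (map F) P ! j) = F ` (set (P!i) \<inter> set (P!j))"
        unfolding e1 e2 by (rule inj_on_image_Int[OF injV s1, symmetric])
      also have "\<dots> \<subseteq> F ` {fr.u, fr.v}"
      proof (rule image_mono)
        show "set (P!i) \<inter> set (P!j) \<subseteq> {fr.u, fr.v}" using P(4) ij' ij(3) by blast
      qed
      also have "\<dots> = {(A,B,C,d), (A',B',C',d')}" using Fu Fv by simp
      finally show "set (map (map F) P ! i) \<inter> set (map (map F) P ! j) \<subseteq> {(A,B,C,d), (A',B',C',d')}" .
    qed
  qed
qed

end
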